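(* Let $K=\mathrm{SU}(2)$, $\mathcal{M}=\{(g_1,h_1,g_2,h_2)\in K^4:[g_1,h_1][g_2,h_2]=I\}/K$ with the quotient topology, and $\mathcal{M}^\circ=\mu^{-1}(\tilde\Delta^\circ)$. Then $\mathcal{M}^\circ$ is open and dense in $\mathcal{M}$.
   Context: $[a,b]=aba^{-1}b^{-1}$; $K$ acts by simultaneous conjugation; $[g_1;h_1;g_2;h_2]$ denotes a class. For $a\in K$ let $f(a)=\frac1\pi\arccos(\mathrm{tr}(a)/2)$; $\mu([g_1;h_1;g_2;h_2])=(f(h_1),f(h_2),f(h_1h_2))$. $\tilde\Delta$ is the tetrahedron with vertices $(0,0,0),(0,1,1),(1,0,1),(1,1,0)$ and $\tilde\Delta^\circ$ its interior. *)

theory Defs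
  imports "HOL-Analysis.Analysis"
begin

type_synonym cmat = "complex^2^2"
type_synonym quad = "cmat \<times> cmat \<times> cmat \<times> cmat"

definition adj :: "cmat \<Rightarrow> cmat" where
  "adj A = (\<chi> i j. cnj (A $ j $ i))"

definition SU2 :: "cmat set" where
  "SU2 = {A. A ** adj A = mat 1 \<and> det A = 1}"

definition commutator :: "cmat \<Rightarrow> cmat \<Rightarrow> cmat" where
  "commutator a b = a ** b ** matrix_inv a ** matrix_inv b"

definition Rep :: "quad set" where
  "Rep = {(g1, h1, g2, h2). g1 \<in> SU2 \<and> h1 \<in> SU2 \<and> g2 \<in> SU2 \<and> h2 \<in> SU2 \<and>
            commutator g1 h1 ** commutator g2 h2 = mat 1}"

definition conj_act :: "cmat \<Rightarrow> quad \<Rightarrow> quad" where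
  "conj_act k = (\<lambda>(g1, h1, g2, h2).
     (k ** g1 ** matrix_inv k, k ** h1 ** matrix_inv k, k ** g2 ** matrix_inv k, k ** h2 ** matrix_inv k))"


definition cls :: "quad \<Rightarrow> quad set" where
  "cls x = (\<lambda>k. conj_act k x) ` SU2"

definition RepTop :: "quad topology" where
  "RepTop = subtopology euclidean Rep"

definition Mset :: "quad set set" where
  "Mset = cls ` Rep"

definition Mtop :: "quad set topology" where
  "Mtop = topology (\<lambda>U. U \<subseteq> Mset \<and> openin RepTop {x \<in> Rep. cls x \<in> U})"

definition f :: "cmat \<Rightarrow> real" where
  "f a = arccos (Re (trace a) / 2) / pi"

definition mu0 :: "quad \<Rightarrow> real \<times> real \<times> real" where
  "mu0 = (\<lambda>(g1, h1, g2, h2). (f h1, f h2, f (h1 ** h2)))"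

text \<open>mu on classes, evaluated at any representative (it is conjugation invariant).\<close>
definition mu :: "quad set \<Rightarrow> real \<times> real \<times> real" where
  "mu C = mu0 (SOME x. x \<in> C)"

definition tetra :: "(real \<times> real \<times> real) set" where
  "tetra = convex hull {(0,0,0), (0,1,1), (1,0,1), (1,1,0)}"

definition Mcirc :: "quad set set" where
  "Mcirc = {C \<in> Mset. mu C \<in> interior tetra}"

end

theory Submission
  imports Defs
begin


definition Q :: "real \<Rightarrow> real \<Rightarrow> real \<Rightarrow> real \<Rightarrow> cmat" where
  "Q p0 p1 p2 p3 = (\<chi> i j. if i = 1 then (if j = 1 then Complex p0 p1 else Complex p2 p3)
                           else (if j = 1 then Complex (-p2) p3 else Complex p0 (-p1)))"

lemma two_ne: "(1::2) \<noteq> 2" "(2::2) \<noteq> 1" by simp_all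

lemma Q_nth [simp]: "Q p0 p1 p2 p3 $ 1 $ 1 = Complex p0 p1" "Q p0 p1 p2 p3 $ 1 $ 2 = Complex p2 p3"
  "Q p0 p1 p2 p3 $ 2 $ 1 = Complex (-p2) p3" "Q p0 p1 p2 p3 $ 2 $ 2 = Complex p0 (-p1)"
  by (simp_all add: Q_def)

lemma cmat_eq: "(A::cmat) = B \<longleftrightarrow> A$1$1 = B$1$1 \<and> A$1$2 = B$1$2 \<and> A$2$1 = B$2$1 \<and> A$2$2 = B$2$2"
  by (auto simp: vec_eq_iff forall_2)

lemma mult_nth [simp]: "((A::cmat) ** B) $ i $ j = A$i$1 * B$1$j + A$i$2 * B$2$j"
  by (simp add: matrix_matrix_mult_def sum_2)

lemma adj_nth [simp]: "adj A $ i $ j = cnj (A $ j $ i)" by (simp add: adj_def)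

lemma Q_mult: "Q p0 p1 p2 p3 ** Q q0 q1 q2 q3 = Q (p0*q0 - p1*q1 - p2*q2 - p3*q3) (p0*q1 + p1*q0 + p2*q3 - p3*q2)
   (p0*q2 - p1*q3 + p2*q0 + p3*q1) (p0*q3 + p1*q2 - p2*q1 + p3*q0)"
  by (simp add: cmat_eq complex_eq_iff algebra_simps)

lemma Q_eq: "Q p0 p1 p2 p3 = Q q0 q1 q2 q3 \<longleftrightarrow> p0 = q0 \<and> p1 = q1 \<and> p2 = q2 \<and> p3 = q3"
  by (auto simp: cmat_eq complex_eq_iff)

lemma adj_Q: "adj (Q p0 p1 p2 p3) = Q p0 (-p1) (-p2) (-p3)"
  by (simp add: cmat_eq complex_eq_iff)

lemma mat1_Q: "mat 1 = Q 1 0 0 0"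
  by (simp add: cmat_eq mat_def complex_eq_iff)

lemma det_Q: "det (Q p0 p1 p2 p3) = complex_of_real (p0^2+p1^2+p2^2+p3^2)"
  by (simp add: det_2 complex_eq_iff power2_eq_square)

lemma Q_SU2: "p0^2+p1^2+p2^2+p3^2 = 1 \<Longrightarrow> Q p0 p1 p2 p3 \<in> SU2"
  unfolding SU2_def by (simp add: adj_Q Q_mult mat1_Q det_Q Q_eq power2_eq_square algebra_simps)

lemma SU2_Q:
  assumes "A \<in> SU2"
  shows "A = Q (Re (A$1$1)) (Im (A$1$1)) (Re (A$1$2)) (Im (A$1$2)) \<and>
         (Re (A$1$1))^2 + (Im (A$1$1))^2 + (Re (A$1$2))^2 + (Im (A$1$2))^2 = 1"
proof -
  define p where "p = A$1$1"
  define q where "q = A$1$2"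
  define r where "r = A$2$1"
  define w where "w = A$2$2"
  have "A ** adj A = mat 1" "det A = 1" using assms unfolding SU2_def by auto
  then have e1: "p*cnj p + q*cnj q = 1" and e2: "p*cnj r + q*cnj w = 0"
     and e3: "r*cnj p + w*cnj q = 0" and e4: "r * cnj r + w * cnj w = 1"
     and d: "p*w - q*r = 1"
    unfolding p_def q_def r_def w_def by (auto simp: cmat_eq mat_def det_2)
  have "w - cnj p = w*(p*cnj p + q*cnj q) - cnj p*(p*w - q*r)" using e1 d by simp
  also have "\<dots> = q*(r*cnj p + w*cnj q)" by (simp add: algebra_simps)
  finally have sp: "w = cnj p" using e3 by simp
  have "r + cnj q = r*(p*cnj p + q*cnj q) + cnj q*(p*w - q*r)" using e1 d by simp
  also have "\<dots> = p*(r*cnj p + w*cnj q)" by (simp add: algebra_simps)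
  finally have rq: "r = - cnj q" using e3 by (simp add: add_eq_0_iff)
  have "A = Q (Re p) (Im p) (Re q) (Im q)"
    using sp rq unfolding p_def q_def r_def w_def by (simp add: cmat_eq complex_eq_iff)
  moreover have "(Re p)^2 + (Im p)^2 + (Re q)^2 + (Im q)^2 = 1"
    using arg_cong[OF e1, of Re] by (simp add: power2_eq_square)
  ultimately show ?thesis unfolding p_def q_def by simp
qed

lemma SU2_iff: "A \<in> SU2 \<longleftrightarrow> (\<exists>p0 p1 p2 p3. A = Q p0 p1 p2 p3 \<and> p0^2+p1^2+p2^2+p3^2 = 1)"
  using SU2_Q Q_SU2 by metis

lemma adj_mult: "adj ((A::cmat) ** B) = adj B ** adj A"
  by (simp add: cmat_eq algebra_simps)

lemma adj_adj [simp]: "adj (adj A) = A"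
  by (simp add: cmat_eq)

lemma SU2_right: "A \<in> SU2 \<Longrightarrow> A ** adj A = mat 1" unfolding SU2_def by auto
lemma SU2_left: "A \<in> SU2 \<Longrightarrow> adj A ** A = mat 1"
  using SU2_right matrix_left_right_inverse by blast

lemma SU2_inv: "A \<in> SU2 \<Longrightarrow> matrix_inv A = adj A"
proof -
  assume A: "A \<in> SU2"
  have ex: "\<exists>B. A ** B = mat 1 \<and> B ** A = mat 1" using SU2_right[OF A] SU2_left[OF A] by blast
  define B where "B = matrix_inv A"
  have B: "A ** B = mat 1 \<and> B ** A = mat 1" unfolding B_def matrix_inv_def by (rule someI_ex[OF ex])
  have "B = B ** (A ** adj A)" using SU2_right[OF A] by simp
  also have "\<dots> = adj A" using B by (simp add: matrix_mul_assoc)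
  finally show ?thesis unfolding B_def .
qed

lemma SU2_mult: "A \<in> SU2 \<Longrightarrow> B \<in> SU2 \<Longrightarrow> A ** B \<in> SU2"
proof -
  assume A: "A \<in> SU2" and B: "B \<in> SU2"
  have "(A ** B) ** adj (A ** B) = A ** (B ** adj B) ** adj A" by (simp add: adj_mult matrix_mul_assoc)
  also have "\<dots> = mat 1" using SU2_right[OF A] SU2_right[OF B] by simp
  finally show ?thesis using A B unfolding SU2_def by (auto simp: det_mul)
qed

lemma SU2_adj: "A \<in> SU2 \<Longrightarrow> adj A \<in> SU2"
proof -
  assume A: "A \<in> SU2"
  have "det (adj A) = cnj (det A)" by (simp add: det_2 algebra_simps)
  then show ?thesis using A SU2_left[OF A] unfolding SU2_def by auto
qed

lemma SU2_one: "mat 1 \<in> SU2" unfolding mat1_Q by (rule Q_SU2) simp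

lemma Q_comm: "Q p0 p1 p2 p3 ** Q q0 q1 q2 q3 = Q q0 q1 q2 q3 ** Q p0 p1 p2 p3 \<longleftrightarrow>
   p2*q3 = p3*q2 \<and> p3*q1 = p1*q3 \<and> p1*q2 = p2*q1"
  by (auto simp: Q_mult Q_eq algebra_simps)



definition Sopen :: "(real \<times> real \<times> real) set" where
  "Sopen = {x. fst x < fst (snd x) + snd (snd x) \<and> fst (snd x) < fst x + snd (snd x)
             \<and> snd (snd x) < fst x + fst (snd x) \<and> fst x + fst (snd x) + snd (snd x) < 2}"

lemma Sopen_open: "open Sopen"
  unfolding Sopen_def
  by (intro open_Collect_conj open_Collect_less continuous_intros)

lemma Sopen_sub: "Sopen \<subseteq> tetra"
proof
  fix x assume "x \<in> Sopen"
  then obtain a b c where x: "x = (a,b,c)" and h: "a < b + c" "b < a + c" "c < a + b" "a + b + c < 2"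
    unfolding Sopen_def by (cases x) auto
  define l0 where "l0 = 1 - (a+b+c)/2"
  define l1 where "l1 = (b+c-a)/2"
  define l2 where "l2 = (a+c-b)/2"
  define l3 where "l3 = (a+b-c)/2"
  let ?S = "{(0,0,0), (0,1,1), (1,0,1), (1,1,0)} :: (real\<times>real\<times>real) set"
  define u where "u = (\<lambda>y::real\<times>real\<times>real. if y = (0,1,1) then l1 else if y = (1,0,1) then l2
        else if y = (1,1,0) then l3 else l0)"
  have "x \<in> {y. \<exists>u. (\<forall>x\<in>?S. 0 \<le> u x) \<and> sum u ?S = 1 \<and> sum (\<lambda>x. u x *\<^sub>R x) ?S = y}"
    apply (rule CollectI, rule exI[of _ u])
    using h unfolding u_def l0_def l1_def l2_def l3_def x
    by (auto simp: field_simps)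
  then show "x \<in> tetra" unfolding tetra_def by (subst convex_hull_finite) auto
qed

lemma Sopen_interior: "Sopen \<subseteq> interior tetra"
  by (rule interior_maximal[OF Sopen_sub Sopen_open])

lemma arc_tetra:
  fixes p0 q0 s :: real
  assumes p: "p0^2 \<le> 1" and q: "q0^2 \<le> 1" and s: "s^2 < (1-p0^2)*(1-q0^2)"
  shows "(arccos p0/pi, arccos q0/pi, arccos (p0*q0 - s)/pi) \<in> interior tetra"
proof -
  have "\<bar>p0\<bar> \<le> 1" using p by (simp add: abs_square_le_1)
  then have p1: "-1 \<le> p0" "p0 \<le> 1" by auto
  have "\<bar>q0\<bar> \<le> 1" using q by (simp add: abs_square_le_1)
  then have q1: "-1 \<le> q0" "q0 \<le> 1" by auto
  define al where "al = arccos p0"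
  define be where "be = arccos q0"
  have al: "0 \<le> al" "al \<le> pi" "cos al = p0" "sin al = sqrt (1-p0^2)"
    using p1 arccos_bounded sin_arccos unfolding al_def by auto
  have be: "0 \<le> be" "be \<le> pi" "cos be = q0" "sin be = sqrt (1-q0^2)"
    using q1 arccos_bounded sin_arccos unfolding be_def by auto
  have sp: "sin al * sin be = sqrt ((1-p0^2)*(1-q0^2))" using al be by (simp add: real_sqrt_mult)
  have "\<bar>s\<bar> < sin al * sin be" unfolding sp
    using s real_sqrt_less_mono[of "s^2"] by simp
  then have lt1: "cos (al + be) < p0*q0 - s" and lt2: "p0*q0 - s < cos (al - be)"
    using al be by (auto simp: cos_add cos_diff)
  define r where "r = p0*q0 - s"
  have r1: "-1 \<le> r" "r \<le> 1" using lt1 lt2 cos_ge_minus_one[of "al+be"] cos_le_one[of "al-be"]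
    unfolding r_def by linarith+
  define ga where "ga = arccos r"
  have ga: "0 \<le> ga" "ga \<le> pi" "cos ga = r" using r1 arccos_bounded unfolding ga_def by auto
  have cm: "cos (be - al) = cos (al - be)" by (metis cos_minus minus_diff_eq)
  have "cos ga < cos \<bar>al - be\<bar>" using lt2 ga cm unfolding r_def by (simp add: abs_real_def)
  then have g1: "\<bar>al - be\<bar> < ga" using ga al be by (subst (asm) cos_mono_less_eq) auto
  have g2: "ga < al + be \<and> ga < 2*pi - (al + be)"
  proof (cases "al + be \<le> pi")
    case True
    have "cos (al+be) < cos ga" using lt1 ga unfolding r_def by simp
    then have "ga < al + be" using cos_mono_less_eq[of "al+be" ga] True ga al be by auto
    then show ?thesis using True by auto
  next
    case False
    have "cos (al+be) = cos (2*pi - (al+be))" by (simp add: cos_diff)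
    then have "cos (2*pi - (al+be)) < cos ga" using lt1 ga unfolding r_def by simp
    then have "ga < 2*pi - (al + be)" using cos_mono_less_eq[of "2*pi - (al+be)" ga] False ga al be by auto
    then show ?thesis using False ga by auto
  qed
  have "(al/pi, be/pi, ga/pi) \<in> Sopen" unfolding Sopen_def using g1 g2 pi_gt_zero
    by (auto simp: divide_simps abs_real_def split: if_splits)
  then show ?thesis using Sopen_interior unfolding al_def be_def ga_def r_def by auto
qed



lemma mult_cmat_chi: "(A::cmat) ** B = (\<chi> i j. A$i$1 * B$1$j + A$i$2 * B$2$j)"
  by (simp add: vec_eq_iff)

lemma continuous_on_mult [continuous_intros]:
  fixes F G :: "'a::topological_space \<Rightarrow> cmat"
  assumes "continuous_on S F" "continuous_on S G"
  shows "continuous_on S (\<lambda>x. F x ** G x)"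
  unfolding mult_cmat_chi
  by (intro continuous_intros assms)

lemma continuous_on_Q [continuous_intros]:
  fixes a b c d :: "'a::topological_space \<Rightarrow> real"
  assumes "continuous_on S a" "continuous_on S b" "continuous_on S c" "continuous_on S d"
  shows "continuous_on S (\<lambda>x. Q (a x) (b x) (c x) (d x))"
proof -
  have C: "Complex x y = complex_of_real x + \<i> * complex_of_real y" for x y by (simp add: complex_eq_iff)
  show ?thesis unfolding Q_def C
    apply (rule continuous_on_vec_lambda)+
    subgoal for i j by (cases "i = 1"; cases "j = 1") (auto intro!: continuous_intros assms)
    done
qed

lemma f_Q: "f (Q p0 p1 p2 p3) = arccos p0 / pi"
  by (simp add: f_def trace_def sum_2)

lemma continuous_f: "continuous_on SU2 f"
proof -
  have e: "f = (\<lambda>A. arccos (Re (A$1$1 + A$2$2) / 2) / pi)"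
    by (auto simp: f_def trace_def sum_2)
  have b: "-2 \<le> Re (A$1$1) + Re (A$2$2) \<and> Re (A$1$1) + Re (A$2$2) \<le> 2" if AS: "A \<in> SU2" for A
  proof -
    obtain p0 p1 p2 p3 where A: "A = Q p0 p1 p2 p3" "p0^2+p1^2+p2^2+p3^2 = 1" using AS SU2_iff by blast
    then have "p0^2 \<le> 1" by (smt (verit) zero_le_power2)
    then have "\<bar>p0\<bar> \<le> 1" by (simp add: abs_square_le_1)
    then show ?thesis using A by auto
  qed
  show ?thesis
    by (subst e, intro continuous_intros continuous_on_compose2[OF continuous_on_arccos' _ ] ) (auto dest: b)
qed

lemma istop: "istopology (\<lambda>U. U \<subseteq> Mset \<and> openin RepTop {x \<in> Rep. cls x \<in> U})"
  unfolding istopology_def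
proof (rule conjI; intro allI impI)
  fix S T :: "quad set set"
  assume a: "S \<subseteq> Mset \<and> openin RepTop {x \<in> Rep. cls x \<in> S}" "T \<subseteq> Mset \<and> openin RepTop {x \<in> Rep. cls x \<in> T}"
  have "{x \<in> Rep. cls x \<in> S \<inter> T} = {x \<in> Rep. cls x \<in> S} \<inter> {x \<in> Rep. cls x \<in> T}" by auto
  then show "S \<inter> T \<subseteq> Mset \<and> openin RepTop {x \<in> Rep. cls x \<in> S \<inter> T}" using a by auto
next
  fix K :: "quad set set set"
  assume a: "\<forall>S\<in>K. S \<subseteq> Mset \<and> openin RepTop {x \<in> Rep. cls x \<in> S}"
  have "{x \<in> Rep. cls x \<in> \<Union>K} = \<Union>((\<lambda>S. {x \<in> Rep. cls x \<in> S}) ` K)" by auto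
  then show "\<Union>K \<subseteq> Mset \<and> openin RepTop {x \<in> Rep. cls x \<in> \<Union>K}" using a
    by (auto intro!: openin_Union)
qed

lemma openin_Mtop: "openin Mtop U \<longleftrightarrow> U \<subseteq> Mset \<and> openin RepTop {x \<in> Rep. cls x \<in> U}"
  unfolding Mtop_def using istop by simp

lemma topspace_Mtop: "topspace Mtop = Mset"
proof -
  have "{x \<in> Rep. cls x \<in> Mset} = Rep" unfolding Mset_def by auto
  then have "openin Mtop Mset" unfolding openin_Mtop RepTop_def by auto
  then have "Mset \<subseteq> topspace Mtop" by (rule openin_subset)
  moreover have "topspace Mtop \<subseteq> Mset" unfolding topspace_def openin_Mtop by auto
  ultimately show ?thesis by auto
qed

lemma conj_inv: "k \<in> SU2 \<Longrightarrow> (k ** A ** adj k) ** (k ** B ** adj k) = k ** (A ** B) ** adj k"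
proof -
  assume k: "k \<in> SU2"
  have "(k ** A ** adj k) ** (k ** B ** adj k) = k ** A ** (adj k ** k) ** B ** adj k"
    by (simp add: matrix_mul_assoc)
  then show ?thesis using SU2_left[OF k] by (simp add: matrix_mul_assoc)
qed

lemma f_conj: "k \<in> SU2 \<Longrightarrow> f (k ** A ** adj k) = f A"
proof -
  assume k: "k \<in> SU2"
  have "trace (k ** A ** adj k) = trace (adj k ** (k ** A))" by (rule trace_mul_sym)
  also have "\<dots> = trace A" using SU2_left[OF k] by (simp add: matrix_mul_assoc)
  finally show ?thesis by (simp add: f_def)
qed

lemma mu_cls: "mu (cls x) = mu0 x"
proof -
  have ex: "\<exists>z. z \<in> cls x" unfolding cls_def using SU2_one by blast
  have "(SOME z. z \<in> cls x) \<in> cls x" by (rule someI_ex[OF ex])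
  then obtain k where k: "k \<in> SU2" "(SOME z. z \<in> cls x) = conj_act k x" unfolding cls_def by auto
  obtain g1 h1 g2 h2 where x: "x = (g1,h1,g2,h2)" by (cases x) auto
  have "mu (cls x) = mu0 (conj_act k x)" unfolding mu_def k(2) by simp
  also have "\<dots> = mu0 x" unfolding x conj_act_def mu0_def
    using k(1) by (simp add: SU2_inv f_conj conj_inv)
  finally show ?thesis .
qed

lemma continuous_mu0: "continuous_on Rep mu0"
proof -
  have e: "mu0 = (\<lambda>x. (f (fst (snd x)), f (snd (snd (snd x))), f (fst (snd x) ** snd (snd (snd x)))))"
    unfolding mu0_def by auto
  have s1: "fst (snd x) \<in> SU2" "snd (snd (snd x)) \<in> SU2" "fst (snd x) ** snd (snd (snd x)) \<in> SU2"
    if "x \<in> Rep" for x using that unfolding Rep_def by (auto intro: SU2_mult)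
  show ?thesis unfolding e
    by (intro continuous_intros continuous_on_compose2[OF continuous_f]) (auto intro: s1)
qed

lemma lag_id: "(p1^2 + p2^2 + p3^2) * (q1^2 + q2^2 + q3^2) - (p1 * q1 + p2 * q2 + p3 * q3)^2 =
   (p2 * q3 - p3 * q2)^2 + (p3 * q1 - p1 * q3)^2 + (p1 * q2 - p2 * q1)^2" for p1 p2 p3 q1 q2 q3 :: real
  by (simp add: power2_eq_square algebra_simps)

lemma noncomm_mu0:
  assumes "h1 \<in> SU2" "h2 \<in> SU2" "h1 ** h2 \<noteq> h2 ** h1"
  shows "mu0 (g1, h1, g2, h2) \<in> interior tetra"
proof -
  obtain p0 p1 p2 p3 where h1: "h1 = Q p0 p1 p2 p3" "p0^2+p1^2+p2^2+p3^2 = 1" using assms SU2_iff by blast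
  obtain q0 q1 q2 q3 where h2: "h2 = Q q0 q1 q2 q3" "q0^2+q1^2+q2^2+q3^2 = 1" using assms SU2_iff by blast
  have nc: "\<not> (p2*q3 = p3*q2 \<and> p3*q1 = p1*q3 \<and> p1*q2 = p2*q1)" using assms(3) h1 h2 Q_comm by simp
  define s where "s = p1*q1 + p2*q2 + p3*q3"
  have lag: "(1-p0^2)*(1-q0^2) - s^2 = (p2*q3-p3*q2)^2 + (p3*q1-p1*q3)^2 + (p1*q2-p2*q1)^2"
  proof -
    have "1 - p0^2 = p1^2+p2^2+p3^2" "1 - q0^2 = q1^2+q2^2+q3^2" using h1(2) h2(2) by simp_all
    then show ?thesis unfolding s_def using lag_id by simp
  qed
  have "(p2*q3-p3*q2)^2 + (p3*q1-p1*q3)^2 + (p1*q2-p2*q1)^2 > 0" using nc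
    by (smt (verit, best) power2_less_eq_zero_iff right_minus_eq zero_le_power2)
  then have s: "s^2 < (1-p0^2)*(1-q0^2)" using lag by linarith
  have "p0^2 \<le> 1" "q0^2 \<le> 1" using h1(2) h2(2) by (smt (verit) zero_le_power2)+
  from arc_tetra[OF this s] show ?thesis
    unfolding mu0_def h1 h2 by (simp add: Q_mult f_Q s_def algebra_simps)
qed



definition ncen :: "cmat \<Rightarrow> bool" where
  "ncen A \<longleftrightarrow> \<not> (Im (A$1$1) = 0 \<and> A$1$2 = 0)"

lemma ncen_Q: "ncen (Q p0 p1 p2 p3) \<longleftrightarrow> p1 \<noteq> 0 \<or> p2 \<noteq> 0 \<or> p3 \<noteq> 0"
  by (auto simp: ncen_def complex_eq_iff)

lemma cross_trans:
  fixes h1 h2 h3 x1 x2 x3 y1 y2 y3 :: real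
  assumes h: "h1 \<noteq> 0 \<or> h2 \<noteq> 0 \<or> h3 \<noteq> 0"
    and x: "h2*x3 = h3*x2" "h3*x1 = h1*x3" "h1*x2 = h2*x1"
    and y: "h2*y3 = h3*y2" "h3*y1 = h1*y3" "h1*y2 = h2*y1"
  shows "x2*y3 = x3*y2 \<and> x3*y1 = x1*y3 \<and> x1*y2 = x2*y1"
proof -
  have a: "h1*(x2*y3 - x3*y2) = 0" "h2*(x2*y3 - x3*y2) = 0" "h3*(x2*y3 - x3*y2) = 0"
    using x y by algebra+
  have b: "h1*(x3*y1 - x1*y3) = 0" "h2*(x3*y1 - x1*y3) = 0" "h3*(x3*y1 - x1*y3) = 0"
    using x y by algebra+
  have c: "h1*(x1*y2 - x2*y1) = 0" "h2*(x1*y2 - x2*y1) = 0" "h3*(x1*y2 - x2*y1) = 0"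
    using x y by algebra+
  show ?thesis using h a b c by auto
qed

lemma comm_trans:
  assumes "h \<in> SU2" "x \<in> SU2" "y \<in> SU2" "ncen h" "x ** h = h ** x" "y ** h = h ** y"
  shows "x ** y = y ** x"
proof -
  obtain h0 h1 h2 h3 where h: "h = Q h0 h1 h2 h3" using assms SU2_iff by blast
  obtain x0 x1 x2 x3 where x: "x = Q x0 x1 x2 x3" using assms SU2_iff by blast
  obtain y0 y1 y2 y3 where y: "y = Q y0 y1 y2 y3" using assms SU2_iff by blast
  have "h1 \<noteq> 0 \<or> h2 \<noteq> 0 \<or> h3 \<noteq> 0" using assms(4) h ncen_Q by simp
  moreover have "h2*x3 = h3*x2" "h3*x1 = h1*x3" "h1*x2 = h2*x1"
    using assms(5) unfolding h x by (simp_all add: Q_comm) (metis mult.commute)+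
  moreover have "h2*y3 = h3*y2" "h3*y1 = h1*y3" "h1*y2 = h2*y1"
    using assms(6) unfolding h y by (simp_all add: Q_comm) (metis mult.commute)+
  ultimately have "x2*y3 = x3*y2 \<and> x3*y1 = x1*y3 \<and> x1*y2 = x2*y1" by (rule cross_trans)
  then show ?thesis unfolding x y Q_comm by simp
qed

lemma cen_mult_ncen:
  assumes "A \<in> SU2" "\<not> ncen A" "ncen B" "B \<in> SU2"
  shows "ncen (A ** B)"
proof -
  obtain a0 a1 a2 a3 where A: "A = Q a0 a1 a2 a3" "a0^2+a1^2+a2^2+a3^2 = 1" using assms SU2_iff by blast
  then have a: "a1 = 0" "a2 = 0" "a3 = 0" using assms(2) ncen_Q by auto
  then have "a0 \<noteq> 0" using A by auto
  obtain b0 b1 b2 b3 where B: "B = Q b0 b1 b2 b3" using assms(4) SU2_iff by blast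
  show ?thesis using assms(3) \<open>a0 \<noteq> 0\<close> unfolding A B a by (simp add: Q_mult ncen_Q)
qed



lemma Z_exists:
  assumes "g \<in> SU2"
  shows "\<exists>z::real \<Rightarrow> cmat. continuous_on UNIV z \<and> z 0 = mat 1 \<and> (\<forall>t. z t \<in> SU2 \<and> z t ** g = g ** z t)
           \<and> (\<forall>t. sin t \<noteq> 0 \<longrightarrow> ncen (z t))"
proof -
  obtain g0 g1 g2 g3 where g: "g = Q g0 g1 g2 g3" using assms SU2_iff by blast
  define r where "r = sqrt (g1^2+g2^2+g3^2)"
  show ?thesis
  proof (cases "r = 0")
    case True
    then have "g1^2+g2^2+g3^2 = 0" unfolding r_def by simp
    then have "g1^2 = 0 \<and> g2^2 = 0 \<and> g3^2 = 0" by (smt (verit) zero_le_power2)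
    then have z: "g1 = 0" "g2 = 0" "g3 = 0" by auto
    show ?thesis
      apply (rule exI[where x="\<lambda>t::real. Q (cos t) (sin t) 0 0"])
      apply (intro conjI allI impI)
      apply (auto intro!: continuous_intros Q_SU2 simp: mat1_Q g z Q_comm ncen_Q)
      done
  next
    case False
    have r2: "r^2 = g1^2+g2^2+g3^2" unfolding r_def by simp
    have u: "(cos t)^2 + (sin t * g1/r)^2 + (sin t * g2/r)^2 + (sin t * g3/r)^2 = 1" for t
    proof -
      have a: "(sin t * g1/r)^2 + (sin t * g2/r)^2 + (sin t * g3/r)^2 = (sin t)^2 * ((g1^2+g2^2+g3^2)/r^2)"
        by (simp add: power_divide power_mult_distrib algebra_simps add_divide_distrib)
      have b: "(g1^2+g2^2+g3^2)/r^2 = 1" using False by (simp add: r2[symmetric])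
      have "(sin t * g1/r)^2 + (sin t * g2/r)^2 + (sin t * g3/r)^2 = (sin t)^2"
        using a unfolding b by simp
      then show ?thesis using sin_cos_squared_add2[of t] by linarith
    qed
    have nz: "g1 \<noteq> 0 \<or> g2 \<noteq> 0 \<or> g3 \<noteq> 0" using False unfolding r_def by auto
    show ?thesis
      apply (rule exI[of _ "\<lambda>t. Q (cos t) (sin t * g1/r) (sin t * g2/r) (sin t * g3/r)"])
      using nz False
      by (auto intro!: continuous_intros Q_SU2 u simp: mat1_Q g Q_comm ncen_Q)
  qed
qed

lemma K_exists:
  assumes "h \<in> SU2" "ncen h"
  shows "\<exists>k::real \<Rightarrow> cmat. continuous_on UNIV k \<and> k 0 = mat 1 \<and> (\<forall>t. k t \<in> SU2)
           \<and> (\<forall>t. sin t \<noteq> 0 \<longrightarrow> cos t \<noteq> 0 \<longrightarrow> (k t ** h ** adj (k t)) ** h \<noteq> h ** (k t ** h ** adj (k t)))"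
proof -
  obtain h0 h1 h2 h3 where h: "h = Q h0 h1 h2 h3" using assms SU2_iff by blast
  have nz: "h1 \<noteq> 0 \<or> h2 \<noteq> 0 \<or> h3 \<noteq> 0" using assms(2) h ncen_Q by simp
  show ?thesis
  proof (cases "h2 = 0 \<and> h3 = 0")
    case False
    then have pos: "h2^2 + h3^2 \<noteq> 0" by (simp add: sum_power2_eq_zero_iff)
    have key: "sin t \<noteq> 0 \<Longrightarrow> cos t \<noteq> 0 \<Longrightarrow>
      (Q (cos t) (sin t) 0 0 ** h ** adj (Q (cos t) (sin t) 0 0)) ** h \<noteq> h ** (Q (cos t) (sin t) 0 0 ** h ** adj (Q (cos t) (sin t) 0 0))" for t
    proof
      assume s: "sin t \<noteq> 0" "cos t \<noteq> 0"
      define c where "c = cos t"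
      define sn where "sn = sin t"
      assume "(Q (cos t) (sin t) 0 0 ** h ** adj (Q (cos t) (sin t) 0 0)) ** h = h ** (Q (cos t) (sin t) 0 0 ** h ** adj (Q (cos t) (sin t) 0 0))"
      then have "(Q c sn 0 0 ** Q h0 h1 h2 h3 ** Q c (-sn) 0 0) ** Q h0 h1 h2 h3 = Q h0 h1 h2 h3 ** (Q c sn 0 0 ** Q h0 h1 h2 h3 ** Q c (-sn) 0 0)"
        unfolding c_def sn_def h adj_Q by simp
      then have e: "2 * c * sn * (h2^2+h3^2) = 0"
        unfolding Q_mult Q_eq by algebra
      then show False using s pos unfolding c_def sn_def by simp
    qed
    show ?thesis
      apply (rule exI[of _ "\<lambda>t. Q (cos t) (sin t) 0 0"])
      using key by (auto intro!: continuous_intros Q_SU2 simp: mat1_Q)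
  next
    case True
    then have h23: "h2 = 0" "h3 = 0" by auto
    then have pos: "h1 \<noteq> 0" using nz by auto
    have key: "sin t \<noteq> 0 \<Longrightarrow> cos t \<noteq> 0 \<Longrightarrow>
      (Q (cos t) 0 (sin t) 0 ** h ** adj (Q (cos t) 0 (sin t) 0)) ** h \<noteq> h ** (Q (cos t) 0 (sin t) 0 ** h ** adj (Q (cos t) 0 (sin t) 0))" for t
    proof
      assume s: "sin t \<noteq> 0" "cos t \<noteq> 0"
      define c where "c = cos t"
      define sn where "sn = sin t"
      assume "(Q (cos t) 0 (sin t) 0 ** h ** adj (Q (cos t) 0 (sin t) 0)) ** h = h ** (Q (cos t) 0 (sin t) 0 ** h ** adj (Q (cos t) 0 (sin t) 0))"
      then have "(Q c 0 sn 0 ** Q h0 h1 0 0 ** Q c 0 (-sn) 0) ** Q h0 h1 0 0 = Q h0 h1 0 0 ** (Q c 0 sn 0 ** Q h0 h1 0 0 ** Q c 0 (-sn) 0)"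
        unfolding c_def sn_def h h23 adj_Q by simp
      then have e: "c * sn * h1 * h1 = 0"
        unfolding Q_mult Q_eq by algebra
      then show False using s pos unfolding c_def sn_def by simp
    qed
    show ?thesis
      apply (rule exI[of _ "\<lambda>t. Q (cos t) 0 (sin t) 0"])
      using key by (auto intro!: continuous_intros Q_SU2 simp: mat1_Q)
  qed
qed



definition NC :: "quad set" where
  "NC = {x \<in> Rep. fst (snd x) ** snd (snd (snd x)) \<noteq> snd (snd (snd x)) ** fst (snd x)}"

definition B1 :: "quad set" where "B1 = {x \<in> Rep. ncen (fst (snd x))}"
definition B2 :: "quad set" where "B2 = {x \<in> Rep. ncen (fst (snd x)) \<and> ncen (snd (snd (snd x)))}"

lemma continuous_on_adj [continuous_intros]:
  fixes F :: "'a::topological_space \<Rightarrow> cmat"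
  assumes "continuous_on S F"
  shows "continuous_on S (\<lambda>x. adj (F x))"
  unfolding adj_def by (intro continuous_intros assms)

lemma comm_SU2: "a \<in> SU2 \<Longrightarrow> b \<in> SU2 \<Longrightarrow> commutator a b = a ** b ** adj a ** adj b"
  by (simp add: commutator_def SU2_inv)

lemma comm_mult_right:
  assumes g: "g \<in> SU2" and h: "h \<in> SU2" and z: "z \<in> SU2" and c: "z ** g = g ** z"
  shows "commutator g (h ** z) = commutator g h"
proof -
  have za: "z ** adj g = adj g ** z"
  proof -
    have "adj g ** (z ** g) ** adj g = adj g ** (g ** z) ** adj g" using c by simp
    then have "adj g ** z ** (g ** adj g) = (adj g ** g) ** z ** adj g" by (simp add: matrix_mul_assoc)
    then show ?thesis using SU2_right[OF g] SU2_left[OF g] by simp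
  qed
  have "commutator g (h ** z) = g ** h ** (z ** adj g) ** adj z ** adj h"
    using g h z by (simp add: comm_SU2 SU2_mult adj_mult matrix_mul_assoc)
  also have "\<dots> = g ** h ** adj g ** (z ** adj z) ** adj h" using za by (simp add: matrix_mul_assoc)
  also have "\<dots> = commutator g h" using SU2_right[OF z] g h by (simp add: comm_SU2)
  finally show ?thesis .
qed

lemma comm_one: "a \<in> SU2 \<Longrightarrow> b \<in> SU2 \<Longrightarrow> a ** b = b ** a \<Longrightarrow> commutator a b = mat 1"
proof -
  assume a: "a \<in> SU2" and b: "b \<in> SU2" and c: "a ** b = b ** a"
  have "commutator a b = (a ** b) ** adj a ** adj b" using a b by (simp add: comm_SU2)
  also have "\<dots> = b ** (a ** adj a) ** adj b" using c by (simp add: matrix_mul_assoc)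
  also have "\<dots> = mat 1" using SU2_right[OF a] SU2_right[OF b] by simp
  finally show ?thesis .
qed

lemma Rep_iff: "(g1, h1, g2, h2) \<in> Rep \<longleftrightarrow> g1 \<in> SU2 \<and> h1 \<in> SU2 \<and> g2 \<in> SU2 \<and> h2 \<in> SU2 \<and>
            commutator g1 h1 ** commutator g2 h2 = mat 1"
  unfolding Rep_def by simp

lemma fam:
  fixes \<gamma> :: "real \<Rightarrow> quad"
  assumes c: "continuous_on UNIV \<gamma>" and g0: "\<gamma> 0 = x" and B: "\<And>t. 0 < t \<Longrightarrow> t < pi/2 \<Longrightarrow> \<gamma> t \<in> B"
  shows "x \<in> closure B"
  unfolding closure_approachable
proof (intro allI impI)
  fix e :: real assume e: "e > 0"
  obtain d where d: "d > 0" "\<And>t. dist t 0 < d \<Longrightarrow> dist (\<gamma> t) (\<gamma> 0) < e"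
    using c e unfolding continuous_on_iff by blast
  define t where "t = min (d/2) (pi/4)"
  have t4: "t \<le> pi/4" "t \<le> d/2" unfolding t_def by simp_all
  have t0: "0 < t" unfolding t_def using d pi_gt_zero by simp
  have t: "0 < t" "t < pi/2" "dist t 0 < d" using t0 t4 d pi_gt_zero by (auto simp: dist_real_def)
  show "\<exists>y\<in>B. dist y x < e" using B[OF t(1,2)] d(2)[OF t(3)] g0 by auto
qed

lemma sc_pos: "0 < t \<Longrightarrow> t < pi/2 \<Longrightarrow> sin t \<noteq> 0 \<and> cos t \<noteq> 0"
  using sin_gt_zero[of t] cos_gt_zero_pi[of t] by auto

lemma step1: "Rep \<subseteq> closure B1"
proof
  fix x assume x: "x \<in> Rep"
  obtain g1 h1 g2 h2 where xx: "x = (g1,h1,g2,h2)" by (cases x) auto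
  have R: "g1 \<in> SU2" "h1 \<in> SU2" "g2 \<in> SU2" "h2 \<in> SU2" "commutator g1 h1 ** commutator g2 h2 = mat 1"
    using x unfolding xx Rep_iff by auto
  show "x \<in> closure B1"
  proof (cases "ncen h1")
    case True
    then have "x \<in> B1" using x unfolding xx B1_def by auto
    then show ?thesis using closure_subset by blast
  next
    case False
    obtain z :: "real \<Rightarrow> cmat" where z: "continuous_on UNIV z" "z 0 = mat 1"
      "\<And>t. z t \<in> SU2" "\<And>t. z t ** g1 = g1 ** z t" "\<And>t. sin t \<noteq> 0 \<Longrightarrow> ncen (z t)"
      using Z_exists[OF R(1)] by blast
    show ?thesis
    proof (rule fam[where \<gamma> = "\<lambda>t. (g1, h1 ** z t, g2, h2)"])
      show "continuous_on UNIV (\<lambda>t. (g1, h1 ** z t, g2, h2))" by (intro continuous_intros z(1))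
      show "(g1, h1 ** z 0, g2, h2) = x" using z(2) xx by simp
      fix t :: real assume "0 < t" "t < pi/2"
      then have "sin t \<noteq> 0" using sc_pos by blast
      then show "(g1, h1 ** z t, g2, h2) \<in> B1" unfolding B1_def Rep_iff
        using R z(3-5) comm_mult_right[OF R(1,2) z(3) z(4)] cen_mult_ncen[OF R(2) False]
        by (auto intro: SU2_mult simp: Rep_iff)
    qed
  qed
qed

lemma step2: "B1 \<subseteq> closure B2"
proof
  fix x assume x: "x \<in> B1"
  obtain g1 h1 g2 h2 where xx: "x = (g1,h1,g2,h2)" by (cases x) auto
  have R: "g1 \<in> SU2" "h1 \<in> SU2" "g2 \<in> SU2" "h2 \<in> SU2" "commutator g1 h1 ** commutator g2 h2 = mat 1"
    and n1: "ncen h1"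
    using x unfolding xx B1_def by (auto simp: Rep_iff)
  show "x \<in> closure B2"
  proof (cases "ncen h2")
    case True
    then have "x \<in> B2" using x n1 unfolding xx B1_def B2_def by auto
    then show ?thesis using closure_subset by blast
  next
    case False
    obtain z :: "real \<Rightarrow> cmat" where z: "continuous_on UNIV z" "z 0 = mat 1"
      "\<And>t. z t \<in> SU2" "\<And>t. z t ** g2 = g2 ** z t" "\<And>t. sin t \<noteq> 0 \<Longrightarrow> ncen (z t)"
      using Z_exists[OF R(3)] by blast
    show ?thesis
    proof (rule fam[where \<gamma> = "\<lambda>t. (g1, h1, g2, h2 ** z t)"])
      show "continuous_on UNIV (\<lambda>t. (g1, h1, g2, h2 ** z t))" by (intro continuous_intros z(1))
      show "(g1, h1, g2, h2 ** z 0) = x" using z(2) xx by simp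
      fix t :: real assume "0 < t" "t < pi/2"
      then have "sin t \<noteq> 0" using sc_pos by blast
      then show "(g1, h1, g2, h2 ** z t) \<in> B2" unfolding B2_def Rep_iff
        using R n1 z(3-5) comm_mult_right[OF R(3,4) z(3) z(4)] cen_mult_ncen[OF R(4) False]
        by (auto intro: SU2_mult simp: Rep_iff)
    qed
  qed
qed



lemma step3: "B2 \<subseteq> closure NC"
proof
  fix x assume x: "x \<in> B2"
  obtain g1 h1 g2 h2 where xx: "x = (g1,h1,g2,h2)" by (cases x) auto
  have R: "g1 \<in> SU2" "h1 \<in> SU2" "g2 \<in> SU2" "h2 \<in> SU2" "commutator g1 h1 ** commutator g2 h2 = mat 1"
    and n1: "ncen h1" and n2: "ncen h2"
    using x unfolding xx B2_def by (auto simp: Rep_iff)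
  show "x \<in> closure NC"
  proof (cases "h1 ** h2 = h2 ** h1")
    case False
    then have "x \<in> NC" using x unfolding xx B2_def NC_def by auto
    then show ?thesis using closure_subset by blast
  next
    case hc: True
    show ?thesis
    proof (cases "g1 ** h1 = h1 ** g1")
      case False
      obtain z :: "real \<Rightarrow> cmat" where z: "continuous_on UNIV z" "z 0 = mat 1"
        "\<And>t. z t \<in> SU2" "\<And>t. z t ** g1 = g1 ** z t" "\<And>t. sin t \<noteq> 0 \<Longrightarrow> ncen (z t)"
        using Z_exists[OF R(1)] by blast
      show ?thesis
      proof (rule fam[where \<gamma> = "\<lambda>t. (g1, h1 ** z t, g2, h2)"])
        show "continuous_on UNIV (\<lambda>t. (g1, h1 ** z t, g2, h2))" by (intro continuous_intros z(1))
        show "(g1, h1 ** z 0, g2, h2) = x" using z(2) xx by simp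
        fix t :: real assume "0 < t" "t < pi/2"
        then have st: "sin t \<noteq> 0" using sc_pos by blast
        have nc: "(h1 ** z t) ** h2 \<noteq> h2 ** (h1 ** z t)"
        proof
          assume e: "(h1 ** z t) ** h2 = h2 ** (h1 ** z t)"
          have "h1 ** (z t ** h2) = h1 ** (h2 ** z t)"
            using e hc by (metis matrix_mul_assoc)
          then have "adj h1 ** (h1 ** (z t ** h2)) = adj h1 ** (h1 ** (h2 ** z t))" by simp
          then have zh2: "z t ** h2 = h2 ** z t" using SU2_left[OF R(2)] by (simp add: matrix_mul_assoc)
          have zh1: "z t ** h1 = h1 ** z t" by (rule comm_trans[OF R(4) z(3) R(2) n2 zh2 hc])
          have "g1 ** h1 = h1 ** g1"
            by (rule comm_trans[OF z(3) R(1) R(2) z(5)[OF st] z(4)[symmetric] zh1[symmetric]])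
          then show False using False by simp
        qed
        show "(g1, h1 ** z t, g2, h2) \<in> NC" unfolding NC_def
          using R nc z(3) comm_mult_right[OF R(1,2) z(3) z(4)]
          by (auto intro: SU2_mult simp: Rep_iff)
      qed
    next
      case gc: True
      obtain k :: "real \<Rightarrow> cmat" where k: "continuous_on UNIV k" "k 0 = mat 1" "\<And>t. k t \<in> SU2"
        "\<And>t. sin t \<noteq> 0 \<Longrightarrow> cos t \<noteq> 0 \<Longrightarrow> (k t ** h1 ** adj (k t)) ** h1 \<noteq> h1 ** (k t ** h1 ** adj (k t))"
        using K_exists[OF R(2) n1] by blast
      have adj1: "adj (mat 1) = (mat 1 :: cmat)" by (simp add: mat1_Q adj_Q)
      have c1: "commutator g1 h1 = mat 1" by (rule comm_one[OF R(1,2) gc])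
      then have c2: "commutator g2 h2 = mat 1" using R(5) by simp
      show ?thesis
      proof (rule fam[where \<gamma> = "\<lambda>t. (k t ** g1 ** adj (k t), k t ** h1 ** adj (k t), g2, h2)"])
        show "continuous_on UNIV (\<lambda>t. (k t ** g1 ** adj (k t), k t ** h1 ** adj (k t), g2, h2))"
          by (intro continuous_intros k(1))
        show "(k 0 ** g1 ** adj (k 0), k 0 ** h1 ** adj (k 0), g2, h2) = x" using k(2) xx adj1 by simp
        fix t :: real assume "0 < t" "t < pi/2"
        then have st: "sin t \<noteq> 0" "cos t \<noteq> 0" using sc_pos by blast+
        define a where "a = k t ** g1 ** adj (k t)"
        define b where "b = k t ** h1 ** adj (k t)"
        have aS: "a \<in> SU2" "b \<in> SU2" unfolding a_def b_def using k(3) R by (auto intro: SU2_mult SU2_adj)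
        have ab: "a ** b = b ** a" unfolding a_def b_def using conj_inv[OF k(3)] gc by metis
        have nc: "b ** h2 \<noteq> h2 ** b"
        proof
          assume e: "b ** h2 = h2 ** b"
          have "b ** h1 = h1 ** b" by (rule comm_trans[OF R(4) aS(2) R(2) n2 e hc])
          then show False using k(4)[OF st] unfolding b_def by simp
        qed
        show "(k t ** g1 ** adj (k t), k t ** h1 ** adj (k t), g2, h2) \<in> NC"
          unfolding NC_def a_def[symmetric] b_def[symmetric]
          using R aS nc comm_one[OF aS ab] c2 by (auto simp: Rep_iff)
      qed
    qed
  qed
qed

lemma density: "Rep \<subseteq> closure NC"
proof -
  have "Rep \<subseteq> closure B1" by (rule step1)
  also have "\<dots> \<subseteq> closure (closure B2)" using step2 closure_mono by blast
  also have "\<dots> \<subseteq> closure (closure (closure NC))" using step3 closure_mono by blast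
  finally show ?thesis by simp
qed




lemma Mcirc_pre: "{x \<in> Rep. cls x \<in> Mcirc} = Rep \<inter> mu0 -` interior tetra"
  unfolding Mcirc_def Mset_def using mu_cls by auto

theorem mainTheorem10:
  shows "openin Mtop Mcirc \<and> Mtop closure_of Mcirc = topspace Mtop"
proof
  show "openin Mtop Mcirc" unfolding openin_Mtop Mcirc_pre RepTop_def
    using continuous_openin_preimage_gen[OF continuous_mu0 open_interior] Mcirc_def by auto
  show "Mtop closure_of Mcirc = topspace Mtop"
  proof
    show "Mtop closure_of Mcirc \<subseteq> topspace Mtop" by (rule closure_of_subset_topspace)
    show "topspace Mtop \<subseteq> Mtop closure_of Mcirc"
    proof
      fix C assume "C \<in> topspace Mtop"
      then obtain x where x: "x \<in> Rep" "C = cls x" unfolding topspace_Mtop Mset_def by auto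
      show "C \<in> Mtop closure_of Mcirc" unfolding in_closure_of
      proof (intro conjI allI impI)
        show "C \<in> topspace Mtop" by fact
        fix T assume T: "C \<in> T \<and> openin Mtop T"
        then have "openin (top_of_set Rep) {x \<in> Rep. cls x \<in> T}" unfolding openin_Mtop RepTop_def by auto
        then obtain W where W: "open W" "{x \<in> Rep. cls x \<in> T} = Rep \<inter> W" unfolding openin_open by auto
        have "x \<in> W" using W T x by auto
        moreover have "x \<in> closure NC" using density x by auto
        ultimately obtain y where y: "y \<in> NC" "y \<in> W" using W(1) closure_iff_nhds_not_empty by blast
        have yR: "y \<in> Rep" using y NC_def by auto
        have "cls y \<in> T" using W yR y by auto
        moreover have "cls y \<in> Mcirc"
        proof -
          obtain g1 h1 g2 h2 where yy: "y = (g1,h1,g2,h2)" by (cases y) auto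
          have "h1 \<in> SU2" "h2 \<in> SU2" "h1 ** h2 \<noteq> h2 ** h1" using y yR unfolding yy NC_def Rep_def by auto
          then have "mu0 y \<in> interior tetra" unfolding yy by (rule noncomm_mu0)
          then show ?thesis unfolding Mcirc_def Mset_def using yR mu_cls by auto
        qed
        ultimately show "\<exists>y. y \<in> Mcirc \<and> y \<in> T" by blast
      qed
    qed
  qed
qed

end
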